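(* Let $n>1$ be an integer and $\nu_n(x)=\sum_{d\mid n}\mu(d)\{x/d\}$. Then $$\sum_{a\in U_n}\nu_n(a)\,a=-\frac{n\phi(n)}{4}+n\sum_{d_1\mid n}\sum_{d_2\mid n}\mu(d_1)\mu(d_2)\,s\!\left(\frac{n}{d_1},\frac{n}{d_2}\right).$$
   Context: $U_n$ is the set of positive integers less than $n$ and coprime with $n$; $\{y\}$ is the fractional part; $\mu$ is the Möbius function, $\phi$ Euler's totient function. For positive integers $b,a$ (no coprimality assumed), $s(b,a)=\sum_{k=1}^{a}\left(\left(\frac{kb}{a}\right)\right)\left(\left(\frac{k}{a}\right)\right)$, where $((x))=\{x\}-\tfrac12$ if $x\notin\mathbb{Z}$ and $((x))=0$ if $x\in\mathbb{Z}$. *)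

theory Defs
  imports "HOL-Number_Theory.Number_Theory" "HOL-Computational_Algebra.Squarefree"
begin

definition moebius_mu :: "nat \<Rightarrow> int" where
  "moebius_mu d = (if squarefree d then (-1) ^ card (prime_factors d) else 0)"

definition sawtooth :: "real \<Rightarrow> real" where
  "sawtooth x = (if x \<in> \<int> then 0 else frac x - 1/2)"

text \<open>Dedekind sum s(b,a), no coprimality assumed.\<close>
definition dedekind_sum :: "nat \<Rightarrow> nat \<Rightarrow> real" where
  "dedekind_sum b a = (\<Sum>k=1..a. sawtooth (real (k*b) / real a) * sawtooth (real k / real a))"

definition U :: "nat \<Rightarrow> nat set" where
  "U n = {a. 0 < a \<and> a < n \<and> coprime a n}"

definition nu :: "nat \<Rightarrow> real \<Rightarrow> real" where
  "nu n x = (\<Sum>d | d dvd n. real_of_int (moebius_mu d) * frac (x / real d))"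

end

theory Submission
  imports Defs
begin

lemma alt_pow_sum:
  assumes "finite P" "P \<noteq> {}"
  shows "(\<Sum>S\<in>Pow P. (-1::int) ^ card S) = 0"
proof -
  have "card {T. T \<subseteq> P \<and> {} \<subseteq> T \<and> even(card T)} = card {T. T \<subseteq> P \<and> {} \<subseteq> T \<and> odd(card T)}"
    using card_subsupersets_even_odd[of P "{}"] assms by auto
  then have "(\<Sum>S\<in>Pow P. (-1::int) ^ card S) = 0"
    by (intro sum_alternating_cancels) (auto simp: assms Pow_def)
  thus ?thesis .
qed

lemma sqf_prod:
  fixes d :: nat assumes "squarefree d" "d > 0"
  shows "\<Prod>(prime_factors d) = d"
proof -
  have "(\<Prod>p \<in> prime_factors d. p ^ multiplicity p d) = d"
    using prod_prime_factors[of d] assms by simp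
  moreover have "(\<Prod>p \<in> prime_factors d. p ^ multiplicity p d) = \<Prod>(prime_factors d)"
    using squarefree_factorial_semiring'[of d] assms by (intro prod.cong) auto
  ultimately show ?thesis by simp
qed

lemma pf_prod:
  fixes S :: "nat set" assumes "finite S" "\<And>p. p \<in> S \<Longrightarrow> prime p"
  shows "prime_factors (\<Prod>S) = S"
proof -
  have "prime_factors (\<Prod>S) = \<Union>((prime_factors \<circ> (\<lambda>x. x)) ` S)"
    using assms by (intro prime_factors_prod) (auto, metis not_prime_0)
  also have "\<dots> = S" using assms by (auto simp: prime_prime_factors)
  finally show ?thesis .
qed

lemma sqf_prod_primes:
  fixes S :: "nat set" assumes "finite S" "\<And>p. p \<in> S \<Longrightarrow> prime p"
  shows "squarefree (\<Prod>S)"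
  using assms
proof (induction S rule: finite_induct)
  case empty then show ?case by simp
next
  case (insert x F)
  have "coprime x (\<Prod>F)"
  proof -
    have "\<not> x dvd \<Prod>F"
    proof
      assume "x dvd \<Prod>F"
      then have "x \<in> prime_factors (\<Prod>F)" using insert
        by (metis (no_types, lifting) in_prime_factors_iff insertCI prod_zero_iff
            not_prime_0)
      then show False using pf_prod[of F] insert by auto
    qed
    then show ?thesis using insert prime_imp_coprime by auto
  qed
  then show ?case using insert squarefree_mult_coprime squarefree_prime by auto
qed

lemma prod_pf_dvd:
  fixes m :: nat assumes "m > 0"
  shows "\<Prod>(prime_factors m) dvd m"
proof -
  have "\<Prod>(prime_factors m) dvd (\<Prod>p \<in> prime_factors m. p ^ multiplicity p m)"
    by (intro prod_dvd_prod) (metis dvd_power in_prime_factors_iff multiplicity_eq_zero_iff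
        not_gr0 power_0 prime_factors_multiplicity)
  also have "\<dots> = m" using prod_prime_factors[of m] assms by simp
  finally show ?thesis .
qed

lemma mu_sum:
  fixes m :: nat assumes "m > 0"
  shows "(\<Sum>d | d dvd m. moebius_mu d) = (if m = 1 then 1 else 0)"
proof -
  let ?P = "prime_factors m"
  have fin: "finite {d. d dvd m}" using assms by (simp add: finite_divisors_nat)
  have "(\<Sum>d | d dvd m. moebius_mu d) = (\<Sum>d \<in> {d. d dvd m \<and> squarefree d}. (-1) ^ card (prime_factors d))"
    by (rule sum.mono_neutral_cong_right) (use fin in \<open>auto simp: moebius_mu_def\<close>)
  also have "\<dots> = (\<Sum>S\<in>Pow ?P. (-1) ^ card S)"
  proof (rule sum.reindex_bij_witness[of _ "\<lambda>S. \<Prod>S" prime_factors])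
    fix d assume d: "d \<in> {d. d dvd m \<and> squarefree d}"
    then have "d > 0" using assms by (auto intro!: Nat.gr0I)
    then show "\<Prod>(prime_factors d) = d" using d sqf_prod by auto
    show "prime_factors d \<in> Pow ?P" using d \<open>d > 0\<close> assms
      by (auto simp: dvd_prime_factors)
    show "(-1) ^ card (prime_factors d) = (-1::int) ^ card (prime_factors d)" by simp
  next
    fix S assume S: "S \<in> Pow ?P"
    then have fS: "finite S" by (meson PowD finite_set_mset finite_subset)
    have pS: "\<And>p. p \<in> S \<Longrightarrow> prime p" using S by auto
    show "prime_factors (\<Prod>S) = S" using pf_prod fS pS by blast
    have "\<Prod>S dvd \<Prod>?P" using S by (intro prod_dvd_prod_subset) auto
    also have "\<dots> dvd m" using prod_pf_dvd assms by blast
    finally show "\<Prod>S \<in> {d. d dvd m \<and> squarefree d}" using sqf_prod_primes fS pS by auto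
  qed
  also have "\<dots> = (if m = 1 then 1 else 0)"
  proof (cases "m = 1")
    case True then show ?thesis by simp
  next
    case False
    then have "?P \<noteq> {}" using assms
      using prime_factorization_empty_iff[of m] by auto
    then have "(\<Sum>S\<in>Pow ?P. (-1::int) ^ card S) = 0" by (intro alt_pow_sum) auto
    then show ?thesis using False by simp
  qed
  finally show ?thesis .
qed

lemma coprime_sum:
  fixes n j :: nat assumes "n > 0" "j > 0"
  shows "(\<Sum>d | d dvd n. real_of_int (moebius_mu d) * (if d dvd j then 1 else 0)) = (if coprime j n then 1 else 0)"
proof -
  have fin: "finite {d. d dvd n}" using assms by (simp add: finite_divisors_nat)
  have "(\<Sum>d | d dvd n. real_of_int (moebius_mu d) * (if d dvd j then 1 else 0))
      = (\<Sum>d \<in> {d. d dvd n}. if d \<in> {d. d dvd j} then real_of_int (moebius_mu d) else 0)"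
    by (rule sum.cong[OF refl]) simp
  also have "\<dots> = (\<Sum>d \<in> {d. d dvd n} \<inter> {d. d dvd j}. real_of_int (moebius_mu d))"
    by (rule sum.inter_restrict[symmetric, OF fin])
  also have "{d. d dvd n} \<inter> {d. d dvd j} = {d. d dvd gcd j n}" unfolding set_eq_iff by (simp add: conj_commute)
  also have "(\<Sum>d | d dvd gcd j n. real_of_int (moebius_mu d)) = real_of_int (\<Sum>d | d dvd gcd j n. moebius_mu d)"
    by (rule of_int_sum[symmetric])
  also have "(\<Sum>d | d dvd gcd j n. moebius_mu d) = (if gcd j n = 1 then 1 else 0)"
    using mu_sum[of "gcd j n"] assms by simp
  finally have "(\<Sum>d | d dvd n. real_of_int (moebius_mu d) * (if d dvd j then 1 else 0)) = (if gcd j n = 1 then 1 else 0)" by simp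
  moreover have "gcd j n = 1 \<longleftrightarrow> coprime j n" by (metis coprime_iff_gcd_eq_1)
  ultimately show ?thesis by simp
qed

lemma ded_expand:
  fixes n d1 d2 :: nat assumes "n > 0" "d1 dvd n" "d2 dvd n"
  shows "dedekind_sum (n div d1) (n div d2) =
    (\<Sum>j=1..n. if d2 dvd j then sawtooth (real j / real d1) * sawtooth (real j / real n) else 0)"
proof -
  have d1: "d1 > 0" and d2: "d2 > 0" using assms by (auto intro!: Nat.gr0I)
  let ?g = "\<lambda>j. sawtooth (real j / real d1) * sawtooth (real j / real n)"
  have "(\<Sum>j=1..n. if d2 dvd j then ?g j else 0) = (\<Sum>j\<in>{j\<in>{1..n}. d2 dvd j}. ?g j)"
    by (rule sum.inter_filter[symmetric]) simp
  also have "{j\<in>{1..n}. d2 dvd j} = (\<lambda>k. k * d2) ` {1..n div d2}"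
  proof (rule equalityI; rule subsetI)
    fix j assume j: "j \<in> {j\<in>{1..n}. d2 dvd j}"
    then have "j = (j div d2) * d2" by auto
    moreover have "1 \<le> j div d2" using j d2 by (auto elim!: dvdE)
    moreover have "j div d2 \<le> n div d2" using j by (auto intro: div_le_mono)
    ultimately show "j \<in> (\<lambda>k. k * d2) ` {1..n div d2}" by force
  next
    fix j assume "j \<in> (\<lambda>k. k * d2) ` {1..n div d2}"
    then obtain k where k: "1 \<le> k" "k \<le> n div d2" "j = k * d2" by auto
    have "k * d2 \<le> n div d2 * d2" using k by simp
    also have "\<dots> = n" using assms by simp
    finally show "j \<in> {j\<in>{1..n}. d2 dvd j}" using k d2 by auto
  qed
  also have "(\<Sum>j\<in>(\<lambda>k. k * d2) ` {1..n div d2}. ?g j) = (\<Sum>k=1..n div d2. ?g (k * d2))"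
    using d2 by (subst sum.reindex) (auto simp: inj_on_def)
  also have "\<dots> = dedekind_sum (n div d1) (n div d2)"
    unfolding dedekind_sum_def
  proof (rule sum.cong[OF refl])
    fix k assume "k \<in> {1..n div d2}"
    have e1: "real (n div d1) = real n / real d1" using assms by (simp add: real_of_nat_div)
    have e2: "real (n div d2) = real n / real d2" using assms by (simp add: real_of_nat_div)
    have "real (k * d2) / real d1 = real (k * (n div d1)) / real (n div d2)"
      unfolding of_nat_mult e1 e2 using d1 d2 assms by (simp add: field_simps)
    moreover have "real (k * d2) / real n = real k / real (n div d2)"
      unfolding of_nat_mult e2 using d1 d2 assms by (simp add: field_simps)
    ultimately show "?g (k * d2) = sawtooth (real (k * (n div d1)) / real (n div d2)) * sawtooth (real k / real (n div d2))"
      by simp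
  qed
  finally show ?thesis by simp
qed

lemma not_int_div:
  fixes n j d :: nat assumes "coprime j n" "d dvd n" "d \<noteq> 1" "d > 0"
  shows "real j / real d \<notin> \<int>"
proof
  assume "real j / real d \<in> \<int>"
  then obtain k where k: "real j / real d = of_int k" by (auto elim: Ints_cases)
  then have "real j = of_int k * real d" using assms by (simp add: field_simps)
  then have "of_int (int j) = (of_int (k * int d) :: real)" by simp
  then have "int j = k * int d" by (simp only: of_int_eq_iff)
  then have "d dvd j" by (metis dvd_triv_right int_dvd_int_iff)
  then have "is_unit d" using assms coprime_common_divisor by blast
  then show False using assms by simp
qed

lemma mu1: "moebius_mu 1 = 1" by (simp add: moebius_mu_def)


lemma U_memb1: "j \<in> U n \<Longrightarrow> n - j \<in> U n"
proof -
  assume j: "j \<in> U n"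
  have jn: "j \<le> n" "coprime j n" using j unfolding U_def by auto
  have "gcd (n - j) n = gcd j n" using gcd_diff2_nat[OF jn(1)] .
  then have "coprime (n - j) n" using jn(2) by (metis coprime_iff_gcd_eq_1)
  then show "n - j \<in> U n" using j by (auto simp: U_def)
qed

lemma U_memb2: "j \<in> U n \<Longrightarrow> n - (n - j) = j"
  by (simp add: U_def)

lemma U_refl: "(\<Sum>j\<in>U n. g j) = (\<Sum>j\<in>U n. g (n - j))"
  by (rule sum.reindex_bij_witness[of _ "\<lambda>j. n - j" "\<lambda>j. n - j"]) (simp_all add: U_memb1 U_memb2)

theorem mainTheorem10:
  fixes n :: nat
  assumes "n > 1"
  shows "(\<Sum>a\<in>U n. nu n (real a) * real a) =
    - (real n * real (totient n)) / 4
    + real n * (\<Sum>d1 | d1 dvd n. \<Sum>d2 | d2 dvd n.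
        real_of_int (moebius_mu d1 * moebius_mu d2) * dedekind_sum (n div d1) (n div d2))"
proof -
  define M where "M d = real_of_int (moebius_mu d)" for d
  let ?D = "{d. d dvd n}"
  have n0: "n > 0" using assms by simp
  have finD: "finite ?D" using n0 by (simp add: finite_divisors_nat)
  have D0: "\<And>d. d \<in> ?D \<Longrightarrow> d > 0" using n0 by (auto intro!: Nat.gr0I)
  have ncop: "\<not> coprime n n" using assms by simp
  have UU: "U n = {j\<in>{1..n}. coprime j n}" 
    unfolding set_eq_iff
  proof (intro allI)
    fix x show "x \<in> U n \<longleftrightarrow> x \<in> {j\<in>{1..n}. coprime j n}"
      using ncop by (cases "x = n") (auto simp: U_def)
  qed
  have Utot: "U n = totatives n" unfolding set_eq_iff
  proof (intro allI)
    fix x show "x \<in> U n \<longleftrightarrow> x \<in> totatives n"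
      using ncop by (cases "x = n") (auto simp: U_def totatives_def)
  qed
  have cardU: "card (U n) = totient n" by (simp add: Utot totient_def)
  have finU: "finite (U n)" by (simp add: U_def)
  have Msum: "(\<Sum>d\<in>?D. M d) = 0"
  proof -
    have "(\<Sum>d\<in>?D. M d) = real_of_int (\<Sum>d\<in>?D. moebius_mu d)" by (simp add: M_def)
    also have "\<dots> = 0" using mu_sum[OF n0] assms by simp
    finally show ?thesis .
  qed
  have M1: "M 1 = 1" unfolding M_def mu1 by simp
  have delta: "(\<Sum>d\<in>?D. M d * (if d = 1 then c else 0)) = c" for c
  proof -
    have "(\<Sum>d\<in>?D. M d * (if d = 1 then c else 0)) = (\<Sum>d\<in>?D. if d = 1 then M 1 * c else 0)"
      by (intro sum.cong refl) auto
    also have "\<dots> = M 1 * c" using finD by (simp add: sum.delta')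
    finally show ?thesis using M1 by simp
  qed
  have saw_n: "sawtooth (real j / real n) = real j / real n - 1/2" if j: "j \<in> U n" for j
  proof -
    have "real j / real n \<notin> \<int>" using not_int_div[of j n n] j assms by (auto simp: U_def)
    moreover have "frac (real j / real n) = real j / real n" using j n0
      by (intro frac_eq_id) (auto simp: U_def)
    ultimately show ?thesis by (simp add: sawtooth_def)
  qed
  have saw_sum: "(\<Sum>d\<in>?D. M d * sawtooth (real j / real d)) = nu n (real j) + 1/2"
    if j: "j \<in> U n" for j
  proof -
    have cj: "coprime j n" using j by (simp add: U_def)
    have sd: "sawtooth (real j / real d) = frac (real j / real d) - 1/2 + (if d = 1 then 1/2 else 0)"
      if d: "d \<in> ?D" for d
    proof (cases "d = 1")
      case True then show ?thesis by (simp add: sawtooth_def)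
    next
      case False
      then have "real j / real d \<notin> \<int>" using not_int_div[OF cj _ False] d D0 by auto
      then show ?thesis using False by (simp add: sawtooth_def)
    qed
    have "(\<Sum>d\<in>?D. M d * sawtooth (real j / real d))
       = (\<Sum>d\<in>?D. M d * frac (real j / real d) - (1/2) * M d + M d * (if d = 1 then 1/2 else 0))"
      by (intro sum.cong refl) (simp only: sd, simp add: algebra_simps)
    also have "\<dots> = (\<Sum>d\<in>?D. M d * frac (real j / real d)) - (1/2) * (\<Sum>d\<in>?D. M d)
        + (\<Sum>d\<in>?D. M d * (if d = 1 then 1/2 else 0))"
      by (simp add: sum.distrib sum_subtractf sum_distrib_left)
    also have "\<dots> = nu n (real j) + 1/2"
      by (simp only: Msum delta) (simp add: nu_def M_def)
    finally show ?thesis .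
  qed
  have nu_sym: "nu n (real (n - j)) = - 1 - nu n (real j)" if j: "j \<in> U n" for j
  proof -
    have cj: "coprime j n" and jn: "j < n" using j by (auto simp: U_def)
    have fr: "frac (real (n - j) / real d) = 1 - frac (real j / real d) - (if d = 1 then 1 else 0)"
      if d: "d \<in> ?D" for d
    proof (cases "d = 1")
      case True
      have "frac (real (n - j)) = 0" "frac (real j) = 0" by (simp_all only: frac_eq_0_iff Ints_of_nat)
      then show ?thesis using True by (simp del: frac_eq_0_iff)
    next
      case False
      have ni: "real j / real d \<notin> \<int>" using not_int_div[OF cj _ False] d D0 by auto
      have "real (n - j) / real d = of_int (int (n div d)) + - (real j / real d)"
        using d D0[OF d] jn by (auto simp: real_of_nat_div of_nat_diff diff_divide_distrib)
      then have "frac (real (n - j) / real d) = frac (- (real j / real d))"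
        by (simp only: frac_add_of_int_left)
      then show ?thesis using ni False by (simp add: frac_neg)
    qed
    have "nu n (real (n - j)) = (\<Sum>d\<in>?D. M d * (1 - frac (real j / real d) - (if d = 1 then 1 else 0)))"
      unfolding nu_def M_def by (intro sum.cong refl) (simp add: fr)
    also have "\<dots> = (\<Sum>d\<in>?D. M d) - (\<Sum>d\<in>?D. M d * frac (real j / real d)) - (\<Sum>d\<in>?D. M d * (if d = 1 then 1 else 0))"
      by (simp add: sum_subtractf sum.distrib algebra_simps)
    also have "\<dots> = - 1 - nu n (real j)"
      by (simp only: Msum delta) (simp add: nu_def M_def)
    finally show ?thesis .
  qed
  have Urefl: "(\<Sum>j\<in>U n. g j) = (\<Sum>j\<in>U n. g (n - j))" for g :: "nat \<Rightarrow> real"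
    by (rule U_refl)
  have sumj: "(\<Sum>j\<in>U n. real j) = real n * real (totient n) / 2"
  proof -
    have "2 * (\<Sum>j\<in>U n. real j) = (\<Sum>j\<in>U n. real j) + (\<Sum>j\<in>U n. real (n - j))"
      using Urefl[of real] by simp
    also have "\<dots> = (\<Sum>j\<in>U n. real n)"
      by (subst sum.distrib[symmetric]) (intro sum.cong refl, auto simp: U_def of_nat_diff)
    also have "\<dots> = real n * real (totient n)" using cardU by simp
    finally show ?thesis by simp
  qed
  have sumnu: "(\<Sum>j\<in>U n. nu n (real j)) = - real (totient n) / 2"
  proof -
    have "2 * (\<Sum>j\<in>U n. nu n (real j)) = (\<Sum>j\<in>U n. nu n (real j)) + (\<Sum>j\<in>U n. nu n (real (n - j)))"
      using Urefl[of "\<lambda>j. nu n (real j)"] by simp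
    also have "\<dots> = (\<Sum>j\<in>U n. - 1)"
    proof (subst sum.distrib[symmetric], rule sum.cong[OF refl])
      fix x assume "x \<in> U n"
      from nu_sym[OF this] show "nu n (real x) + nu n (real (n - x)) = - 1" by linarith
    qed
    also have "\<dots> = - real (totient n)" using cardU by simp
    finally show ?thesis by simp
  qed
  have dbl: "(\<Sum>d1 | d1 dvd n. \<Sum>d2 | d2 dvd n.
        real_of_int (moebius_mu d1 * moebius_mu d2) * dedekind_sum (n div d1) (n div d2))
      = (\<Sum>j\<in>U n. (nu n (real j) + 1/2) * (real j / real n - 1/2))"
  proof -
    let ?s1 = "\<lambda>j d1. M d1 * sawtooth (real j / real d1)"
    let ?s2 = "\<lambda>j d2. M d2 * (if d2 dvd j then 1 else 0)"
    let ?sn = "\<lambda>j. sawtooth (real j / real n)"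
    have "(\<Sum>d1 | d1 dvd n. \<Sum>d2 | d2 dvd n.
        real_of_int (moebius_mu d1 * moebius_mu d2) * dedekind_sum (n div d1) (n div d2))
      = (\<Sum>d1\<in>?D. \<Sum>d2\<in>?D. \<Sum>j=1..n. ?s1 j d1 * ?s2 j d2 * ?sn j)"
      by (intro sum.cong refl) (auto simp: ded_expand n0 sum_distrib_left M_def intro!: sum.cong)
    also have "\<dots> = (\<Sum>d1\<in>?D. \<Sum>j=1..n. \<Sum>d2\<in>?D. ?s1 j d1 * ?s2 j d2 * ?sn j)"
      by (rule sum.cong[OF refl], rule sum.swap)
    also have "\<dots> = (\<Sum>j=1..n. \<Sum>d1\<in>?D. \<Sum>d2\<in>?D. ?s1 j d1 * ?s2 j d2 * ?sn j)"
      by (rule sum.swap)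
    also have "\<dots> = (\<Sum>j=1..n. (\<Sum>d1\<in>?D. ?s1 j d1) * (\<Sum>d2\<in>?D. ?s2 j d2) * ?sn j)"
      by (intro sum.cong refl) (subst sum_product, simp only: sum_distrib_right)
    also have "\<dots> = (\<Sum>j=1..n. if coprime j n then (\<Sum>d1\<in>?D. ?s1 j d1) * ?sn j else 0)"
      by (intro sum.cong refl) (simp add: M_def coprime_sum n0)
    also have "\<dots> = (\<Sum>j\<in>U n. (\<Sum>d1\<in>?D. ?s1 j d1) * ?sn j)"
      unfolding UU by (rule sum.inter_filter[symmetric]) simp
    also have "\<dots> = (\<Sum>j\<in>U n. (nu n (real j) + 1/2) * (real j / real n - 1/2))"
      by (intro sum.cong refl) (simp add: saw_sum saw_n)
    finally show ?thesis .
  qed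
  have trm: "real n * ((nu n (real j) + 1/2) * (real j / real n - 1/2))
     = nu n (real j) * real j - real n / 2 * nu n (real j) + real j / 2 - real n / 4" for j
    using n0 by (simp add: field_simps)
  have "real n * (\<Sum>j\<in>U n. (nu n (real j) + 1/2) * (real j / real n - 1/2))
     = (\<Sum>j\<in>U n. nu n (real j) * real j - real n / 2 * nu n (real j) + real j / 2 - real n / 4)"
    unfolding sum_distrib_left trm ..
  also have "\<dots> = (\<Sum>j\<in>U n. nu n (real j) * real j) - (\<Sum>j\<in>U n. real n / 2 * nu n (real j))
      + (\<Sum>j\<in>U n. real j / 2) - (\<Sum>j\<in>U n. real n / 4)"
    by (simp only: sum.distrib sum_subtractf)
  also have "\<dots> = (\<Sum>j\<in>U n. nu n (real j) * real j) - real n / 2 * (\<Sum>j\<in>U n. nu n (real j))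
      + (\<Sum>j\<in>U n. real j) / 2 - real n / 4 * real (card (U n))"
    by (simp only: sum_distrib_left[symmetric] sum_divide_distrib[symmetric] sum_constant) simp
  also have "\<dots> = (\<Sum>j\<in>U n. nu n (real j) * real j) + real n * real (totient n) / 4"
    unfolding sumnu sumj cardU by (simp add: field_simps)
  finally have fin: "real n * (\<Sum>j\<in>U n. (nu n (real j) + 1/2) * (real j / real n - 1/2))
     = (\<Sum>j\<in>U n. nu n (real j) * real j) + real n * real (totient n) / 4" .
  show ?thesis unfolding dbl using fin by linarith
qed

end
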